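(* Let $N\ge1$, $k>0$, $\gamma>0$, and let all $N$ channels have the same SNR $\gamma$. Define $\bar\Delta^*_{\mathrm{CS}}=\inf_{n>0}\bar\Delta_{\mathrm{CS}}(n)$, $\bar\Delta^*_{\mathrm{MP}}=\inf_{n>0}\left[\frac{n(1+\epsilon_{\mathrm{SC}}(n))}{2N(1-\epsilon_{\mathrm{SC}}(n))}+n\right]$, and $\bar\Delta^*_{\mathrm{PD}}=\inf_{n>0}\bar\Delta_{\mathrm{PD}}(n)$. Then $$\bar\Delta^*_{\mathrm{CS}}\le\bar\Delta^*_{\mathrm{MP}}\le\bar\Delta^*_{\mathrm{PD}}.$$
   Context: Let $Q(x)=\frac{1}{\sqrt{2\pi}}\int_x^\infty e^{-t^2/2}dt$ and for blocklength $n>0$, message size $k$ bits and SNR $\gamma>0$ let $\epsilon(n,k,\gamma)=Q\!\left(\frac{\frac12\log_2(1+\gamma)-\frac kn}{\log_2(e)\sqrt{\frac{1}{2n}\left(1-\frac{1}{(1+\gamma)^2}\right)}}\right)$ (variables treated as continuous). With $N$ channels of common SNR $\gamma$: single-channel error $\epsilon_{\mathrm{SC}}(n)=\epsilon(n,k,\gamma)$; packet duplication error $\epsilon_{\mathrm{PD}}(n)=\epsilon(n,k,\gamma)^N$; codeword splitting error (one codeword split into $N$ fragments of length $n$ sent in parallel) $\epsilon_{\mathrm{CS}}(n)=Q\!\left(\frac{\sum_{i=1}^N\frac12\log_2(1+\gamma)-\frac kn}{\log_2(e)\sqrt{\frac{1}{2n}\sum_{i=1}^N\left(1-\frac{1}{(1+\gamma)^2}\right)}}\right)$.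 For $\chi\in\{\mathrm{PD},\mathrm{CS}\}$, $\bar\Delta_\chi(n)=\frac{n(1+\epsilon_\chi(n))}{2(1-\epsilon_\chi(n))}+n$, the time-average Age of Information of the scheme that every $n$ time units generates a fresh update and delivers it $n$ time units later, successfully with probability $1-\epsilon_\chi(n)$ independently. The expression $\frac{n(1+\epsilon_{\mathrm{SC}}(n))}{2N(1-\epsilon_{\mathrm{SC}}(n))}+n$ is the time-average AoI of the multiplexing scheme (each of the $N$ channels periodically sends a fresh update with blocklength $n$, with offsets $\delta_i=in/N$) with optimal offsets. *)

theory Defs
  imports "HOL-Analysis.Analysis"
begin

definition Qfun :: "real \<Rightarrow> real" where
  "Qfun x = (1 / sqrt (2 * pi)) * (LBINT t:{x..}. exp (- (t^2) / 2))"

text \<open>Normal-approximation error probability epsilon(n,k,gamma); n, k real (continuous).\<close>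
definition eps :: "real \<Rightarrow> real \<Rightarrow> real \<Rightarrow> real" where
  "eps n k \<gamma> = Qfun ((1/2 * log 2 (1 + \<gamma>) - k / n) /
      (log 2 (exp 1) * sqrt (1 / (2 * n) * (1 - 1 / (1 + \<gamma>)^2))))"

definition eps_SC :: "real \<Rightarrow> real \<Rightarrow> real \<Rightarrow> real" where
  "eps_SC k \<gamma> n = eps n k \<gamma>"

definition eps_PD :: "nat \<Rightarrow> real \<Rightarrow> real \<Rightarrow> real \<Rightarrow> real" where
  "eps_PD N k \<gamma> n = (eps n k \<gamma>) ^ N"

definition eps_CS :: "nat \<Rightarrow> real \<Rightarrow> real \<Rightarrow> real \<Rightarrow> real" where
  "eps_CS N k \<gamma> n = Qfun (((\<Sum>i=1..N. 1/2 * log 2 (1 + \<gamma>)) - k / n) /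
      (log 2 (exp 1) * sqrt (1 / (2 * n) * (\<Sum>i=1..N. (1 - 1 / (1 + \<gamma>)^2)))))"

definition aoi :: "real \<Rightarrow> real \<Rightarrow> real" where
  "aoi e n = n * (1 + e) / (2 * (1 - e)) + n"

definition aoi_CS :: "nat \<Rightarrow> real \<Rightarrow> real \<Rightarrow> real \<Rightarrow> real" where
  "aoi_CS N k \<gamma> n = aoi (eps_CS N k \<gamma> n) n"

definition aoi_PD :: "nat \<Rightarrow> real \<Rightarrow> real \<Rightarrow> real \<Rightarrow> real" where
  "aoi_PD N k \<gamma> n = aoi (eps_PD N k \<gamma> n) n"

definition aoi_MP :: "nat \<Rightarrow> real \<Rightarrow> real \<Rightarrow> real \<Rightarrow> real" where
  "aoi_MP N k \<gamma> n = n * (1 + eps_SC k \<gamma> n) / (2 * real N * (1 - eps_SC k \<gamma> n)) + n"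

end

theory Submission
  imports Defs "HOL-Probability.Probability"
begin

lemma Qfun_eq: "Qfun x = (\<integral>t. indicator {x..} t * std_normal_density t \<partial>lborel)"
  unfolding Qfun_def set_lebesgue_integral_def std_normal_density_def
  by (simp add: integral_mult_right_zero[symmetric] mult.assoc mult.left_commute)

lemma Qfun_bounds: "0 \<le> Qfun x \<and> Qfun x \<le> 1"
proof
  show "0 \<le> Qfun x" unfolding Qfun_eq by (rule integral_nonneg_AE) (auto simp: indicator_def)
  have int: "integrable lborel (\<lambda>t. indicator {x..} t * std_normal_density t)"
    using integrable_mult_indicator[of "{x..}" lborel "std_normal_density"] by simp
  have "Qfun x \<le> (\<integral>t. std_normal_density t \<partial>lborel)"
    unfolding Qfun_eq by (rule integral_mono[OF int]) (auto simp: indicator_def)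
  then show "Qfun x \<le> 1" by simp
qed

lemma aoi_nonneg: assumes "0 \<le> e" "e \<le> 1" "0 < n" shows "0 \<le> aoi e n"
proof (cases "e = 1")
  case True then show ?thesis using assms by (simp add: aoi_def)
next
  case False
  then have "e < 1" using assms by simp
  then show ?thesis using assms unfolding aoi_def by (intro add_nonneg_nonneg divide_nonneg_pos) auto
qed

lemma pairing:
  fixes e :: real assumes "0 \<le> e" "e \<le> 1"
  shows "(1 + e) * (\<Sum>i<N. e^i) \<le> real N * (1 + e^N)"
proof -
  have "(1 + e) * (\<Sum>i<N. e^i) = (\<Sum>i<N. e^i + e^(N - i))"
  proof -
    have a: "(\<Sum>i<N. e^(N - i)) = (\<Sum>i<N. e^(Suc i))"
      apply (rule sum.reindex_bij_witness[of _ "\<lambda>i. N - Suc i" "\<lambda>i. N - Suc i"])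
      apply auto
      by (metis Suc_diff_Suc power_Suc)
    show ?thesis by (simp add: sum.distrib a sum_distrib_left algebra_simps)
  qed
  also have "\<dots> \<le> (\<Sum>i<N. 1 + e^N)"
  proof (rule sum_mono)
    fix i assume "i \<in> {..<N}"
    then have "e^N = e^i * e^(N-i)" by (simp add: power_add[symmetric])
    moreover have "0 \<le> (1 - e^i) * (1 - e^(N-i))"
      using assms by (intro mult_nonneg_nonneg) (auto simp: power_le_one)
    ultimately show "e^i + e^(N - i) \<le> 1 + e^N" by (simp add: algebra_simps)
  qed
  finally show ?thesis by simp
qed

lemma MP_le_PD:
  fixes e n :: real assumes "0 \<le> e" "e \<le> 1" "0 < n" "N \<ge> 1"
  shows "n * (1 + e) / (2 * real N * (1 - e)) + n \<le> aoi (e^N) n"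
proof (cases "e = 1")
  case True then show ?thesis by (simp add: aoi_def)
next
  case False
  then have e1: "e < 1" using assms by simp
  have eN: "e^N < 1" using e1 assms by (simp add: power_less_one_iff) 
  have S: "1 - e^N = (1 - e) * (\<Sum>i<N. e^i)"
    by (simp add: one_diff_power_eq)
  have Spos: "(\<Sum>i<N. e^i) > 0" using eN S e1
    by (metis diff_gt_0_iff_gt mult_pos_pos zero_less_mult_pos)
  have key: "(1 + e) * (1 - e^N) \<le> real N * (1 - e) * (1 + e^N)"
    using pairing[OF assms(1,2), of N] e1 unfolding S
    by (metis (no_types, lifting) mult.assoc mult.commute mult_left_mono diff_ge_0_iff_ge less_imp_le)
  have "(1 + e) / (real N * (1 - e)) \<le> (1 + e^N) / (1 - e^N)"
    using key e1 eN assms(4) by (simp add: divide_simps) (simp add: mult_ac)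
  then have "n * ((1 + e) / (real N * (1 - e))) / 2 \<le> n * ((1 + e^N) / (1 - e^N)) / 2"
    using assms(3) by (intro divide_right_mono mult_left_mono) auto
  then show ?thesis unfolding aoi_def by (simp add: field_simps)
qed

lemma CS_eq:
  assumes "N \<ge> 1" "n > 0"
  shows "eps_CS N k \<gamma> (n / real N) = eps_SC k \<gamma> n"
proof -
  have Npos: "real N > 0" using assms by simp
  have "sqrt (1 / (2 * (n / real N)) * (real N * (1 - 1 / (1 + \<gamma>)^2)))
        = real N * sqrt (1 / (2 * n) * (1 - 1 / (1 + \<gamma>)^2))"
  proof -
    have "1 / (2 * (n / real N)) * (real N * (1 - 1 / (1 + \<gamma>)^2))
        = (real N)^2 * (1 / (2 * n) * (1 - 1 / (1 + \<gamma>)^2))"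
      using Npos assms by (simp add: field_simps power2_eq_square)
    then show ?thesis using Npos
      by (simp only: real_sqrt_mult real_sqrt_abs abs_of_nonneg of_nat_0_le_iff)
  qed
  moreover have "real N * (1/2 * log 2 (1 + \<gamma>)) - k / (n / real N)
      = real N * (1/2 * log 2 (1 + \<gamma>) - k / n)"
    using Npos assms by (simp add: field_simps)
  ultimately show ?thesis unfolding eps_CS_def eps_SC_def eps_def
    using Npos by simp
qed

theorem theorem2:
  fixes N :: nat and k \<gamma> :: real
  assumes "N \<ge> 1" and "k > 0" and "\<gamma> > 0"
  shows "Inf (aoi_CS N k \<gamma> ` {0<..}) \<le> Inf (aoi_MP N k \<gamma> ` {0<..})
       \<and> Inf (aoi_MP N k \<gamma> ` {0<..}) \<le> Inf (aoi_PD N k \<gamma> ` {0<..})"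
proof
  have Npos: "real N \<ge> 1" using assms by simp
  have eb: "0 \<le> eps n k \<gamma> \<and> eps n k \<gamma> \<le> 1" for n unfolding eps_def by (rule Qfun_bounds)
  have bCS: "bdd_below (aoi_CS N k \<gamma> ` {0<..})"
    by (rule bdd_belowI2[of _ 0]) (auto simp: aoi_CS_def eps_CS_def intro!: aoi_nonneg Qfun_bounds[THEN conjunct1] Qfun_bounds[THEN conjunct2])
  have bMP: "bdd_below (aoi_MP N k \<gamma> ` {0<..})"
  proof (rule bdd_belowI2[of _ 0])
    fix n :: real assume n: "n \<in> {0<..}"
    have "0 \<le> n * (1 + eps n k \<gamma>) / (2 * (1 - eps n k \<gamma>))"
      using eb[of n] n by (intro divide_nonneg_nonneg mult_nonneg_nonneg) auto
    moreover have "n * (1 + eps n k \<gamma>) / (2 * real N * (1 - eps n k \<gamma>))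
        = (n * (1 + eps n k \<gamma>) / (2 * (1 - eps n k \<gamma>))) / real N" by simp
    ultimately show "0 \<le> aoi_MP N k \<gamma> n" using n Npos
      unfolding aoi_MP_def eps_SC_def by (metis add_nonneg_nonneg divide_nonneg_nonneg greaterThan_iff less_imp_le of_nat_0_le_iff)
  qed
  show "Inf (aoi_CS N k \<gamma> ` {0<..}) \<le> Inf (aoi_MP N k \<gamma> ` {0<..})"
  proof (rule cInf_mono[OF _ bCS])
    show "aoi_MP N k \<gamma> ` {0<..} \<noteq> {}" by auto
    fix b assume "b \<in> aoi_MP N k \<gamma> ` {0<..}"
    then obtain n :: real where n: "n > 0" "b = aoi_MP N k \<gamma> n" by auto
    let ?e = "eps_SC k \<gamma> n"
    have "aoi_CS N k \<gamma> (n / real N) = (n / real N) * (1 + ?e) / (2 * (1 - ?e)) + n / real N"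
      unfolding aoi_CS_def CS_eq[OF assms(1) n(1)] aoi_def by simp
    also have "\<dots> \<le> b"
    proof -
      have "n / real N \<le> n" using n Npos by (simp add: divide_le_eq) 
      moreover have "(n / real N) * (1 + ?e) / (2 * (1 - ?e)) = n * (1 + ?e) / (2 * real N * (1 - ?e))"
        by simp
      ultimately show ?thesis unfolding n(2) aoi_MP_def by linarith
    qed
    finally show "\<exists>a\<in>aoi_CS N k \<gamma> ` {0<..}. a \<le> b" using n Npos
      by (intro bexI[of _ "aoi_CS N k \<gamma> (n / real N)"]) auto
  qed
  show "Inf (aoi_MP N k \<gamma> ` {0<..}) \<le> Inf (aoi_PD N k \<gamma> ` {0<..})"
  proof (rule cInf_mono[OF _ bMP])
    show "aoi_PD N k \<gamma> ` {0<..} \<noteq> {}" by auto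
    fix b assume "b \<in> aoi_PD N k \<gamma> ` {0<..}"
    then obtain n :: real where n: "n > 0" "b = aoi_PD N k \<gamma> n" by auto
    have "aoi_MP N k \<gamma> n \<le> b" unfolding n(2) aoi_MP_def aoi_PD_def eps_PD_def eps_SC_def
      using eb n assms(1) by (intro MP_le_PD) auto
    then show "\<exists>a\<in>aoi_MP N k \<gamma> ` {0<..}. a \<le> b" using n by auto
  qed
qed

end
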